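(* Let $P_{II*}=P_{II}$. For a filter $\Xi\in P_{III*}$, $\mathcal C_{\Xi\text{-unc}}\neq\emptyset$ if and only if $\Xi=\uparrow\{\wedge\Xi\}$ and $\overline\Xi=\downarrow\{\vee\overline\Xi\}$, where $\uparrow\{\boldsymbol\zeta\}=\{\boldsymbol\upsilon\in P_{II}:\boldsymbol\zeta\subseteq\boldsymbol\upsilon\}$ and $\downarrow\{S\}=\{\boldsymbol\upsilon\in P_{II}:\boldsymbol\upsilon\subseteq S\}$.
   Context: Let $n\ge1$, $L=\{1,\dots,n\}$, and for $i\in L$ let $\mathcal H_i$ be a Hilbert space with $1<\dim\mathcal H_i<\infty$; $\mathcal H_X=\bigotimes_{i\in X}\mathcal H_i$ and $\mathcal D_X$ is the set of density operators on $\mathcal H_X$. $P_I$ is the set of partitions of $L$ ordered by refinement. For $\xi\in P_I$, $\mathcal D_{\xi\text{-unc}}=\{\varrho\in\mathcal D_L:\varrho=\bigotimes_{X\in\xi}\varrho_X,\ \varrho_X\in\mathcal D_X\}$, and for $S\subseteq P_I$, $\mathcal D_{S\text{-unc}}=\bigcup_{\xi\in S}\mathcal D_{\xi\text{-unc}}$. $P_{II}$ is the set of nonempty down-sets of $P_I$, ordered by inclusion; $P_{III*}$ is the set of nonempty up-sets of $P_{II*}$. For $\Xi\in P_{III*}$: $\overline\Xi=P_{II*}\setminus\Xi$, $\wedge\Xi=\bigcap_{\boldsymbol\xi\in\Xi}\boldsymbol\xi$, $\vee\overline\Xi=\bigcup_{\boldsymbol\xi'\in\overline\Xi}\boldsymbol\xi'$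 ($\emptyset$ if $\overline\Xi=\emptyset$), and $\mathcal C_{\Xi\text{-unc}}=\bigcap_{\boldsymbol\xi'\in\overline\Xi}(\mathcal D_L\setminus\mathcal D_{\boldsymbol\xi'\text{-unc}})\cap\bigcap_{\boldsymbol\xi\in\Xi}\mathcal D_{\boldsymbol\xi\text{-unc}}$. *)

theory Defs
  imports "HOL-Analysis.Analysis" "HOL-Library.Complex_Order" "HOL-Library.Disjoint_Sets"
begin

text \<open>Concrete model: subsystem i has Hilbert space C^(d i); a basis state of H_X
  is a configuration a in PiE X (lambda i. {..<d i}); an operator on H_X is a
  complex kernel on pairs of configurations (zero outside).\<close>

definition cfg :: "(nat \<Rightarrow> nat) \<Rightarrow> nat set \<Rightarrow> (nat \<Rightarrow> nat) set" where
  "cfg d X = PiE X (\<lambda>i. {..<d i})"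

type_synonym op = "(nat \<Rightarrow> nat) \<Rightarrow> (nat \<Rightarrow> nat) \<Rightarrow> complex"

definition is_density :: "(nat \<Rightarrow> nat) \<Rightarrow> nat set \<Rightarrow> op \<Rightarrow> bool" where
  "is_density d X \<rho> \<longleftrightarrow>
     (\<forall>a b. (a \<notin> cfg d X \<or> b \<notin> cfg d X) \<longrightarrow> \<rho> a b = 0) \<and>
     (\<forall>v :: (nat \<Rightarrow> nat) \<Rightarrow> complex.
        0 \<le> (\<Sum>a\<in>cfg d X. \<Sum>b\<in>cfg d X. cnj (v a) * \<rho> a b * v b)) \<and>
     (\<Sum>a\<in>cfg d X. \<rho> a a) = 1"

definition Dens :: "(nat \<Rightarrow> nat) \<Rightarrow> nat set \<Rightarrow> op set" where
  "Dens d X = {\<rho>. is_density d X \<rho>}"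

definition Lset :: "nat \<Rightarrow> nat set" where
  "Lset n = {1..n}"

definition PI :: "nat \<Rightarrow> nat set set set" where
  "PI n = {\<xi>. partition_on (Lset n) \<xi>}"

definition refines :: "nat set set \<Rightarrow> nat set set \<Rightarrow> bool" where
  "refines \<xi> \<eta> \<longleftrightarrow> (\<forall>X\<in>\<xi>. \<exists>Y\<in>\<eta>. X \<subseteq> Y)"

definition PII :: "nat \<Rightarrow> nat set set set set" where
  "PII n = {S. S \<subseteq> PI n \<and> S \<noteq> {} \<and>
               (\<forall>\<eta>\<in>S. \<forall>\<xi>\<in>PI n. refines \<xi> \<eta> \<longrightarrow> \<xi> \<in> S)}"

definition PIII :: "nat \<Rightarrow> nat set set set set set" where
  "PIII n = {\<Xi>. \<Xi> \<subseteq> PII n \<and> \<Xi> \<noteq> {} \<and>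
               (\<forall>S\<in>\<Xi>. \<forall>T\<in>PII n. S \<subseteq> T \<longrightarrow> T \<in> \<Xi>)}"

definition unc :: "(nat \<Rightarrow> nat) \<Rightarrow> nat \<Rightarrow> nat set set \<Rightarrow> op set" where
  "unc d n \<xi> = {\<rho> \<in> Dens d (Lset n). \<exists>\<rho>s. (\<forall>X\<in>\<xi>. \<rho>s X \<in> Dens d X) \<and>
      (\<forall>a b. \<rho> a b = (if a \<in> cfg d (Lset n) \<and> b \<in> cfg d (Lset n)
                       then (\<Prod>X\<in>\<xi>. \<rho>s X (restrict a X) (restrict b X)) else 0))}"

definition Sunc :: "(nat \<Rightarrow> nat) \<Rightarrow> nat \<Rightarrow> nat set set set \<Rightarrow> op set" where
  "Sunc d n S = (\<Union>\<xi>\<in>S. unc d n \<xi>)"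

definition Cunc :: "(nat \<Rightarrow> nat) \<Rightarrow> nat \<Rightarrow> nat set set set set \<Rightarrow> op set" where
  "Cunc d n \<Xi> = (\<Inter>S'\<in>PII n - \<Xi>. Dens d (Lset n) - Sunc d n S')
                 \<inter> (\<Inter>S\<in>\<Xi>. Sunc d n S)"

end

theory Submission
  imports Defs
begin

definition blk :: "nat set set \<Rightarrow> nat \<Rightarrow> nat set" where
  "blk \<xi> i = (THE Z. Z \<in> \<xi> \<and> i \<in> Z)"

lemma part_eq: "partition_on L \<xi> \<Longrightarrow> X \<in> \<xi> \<Longrightarrow> Y \<in> \<xi> \<Longrightarrow> i \<in> X \<Longrightarrow> i \<in> Y \<Longrightarrow> X = Y"
  by (metis disjnt_iff pairwise_def partition_onD2 disjoint_def)

lemma part_sub: "partition_on L \<xi> \<Longrightarrow> X \<in> \<xi> \<Longrightarrow> X \<subseteq> L"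
  using partition_onD1 by blast

lemma part_ex: "partition_on L \<xi> \<Longrightarrow> i \<in> L \<Longrightarrow> \<exists>Z\<in>\<xi>. i \<in> Z"
  using partition_onD1 by blast

lemma blk: assumes "partition_on L \<xi>" "i \<in> L" shows "blk \<xi> i \<in> \<xi>" "i \<in> blk \<xi> i"
proof -
  obtain Z where Z: "Z \<in> \<xi>" "i \<in> Z" using part_ex[OF assms] by blast
  have "blk \<xi> i = Z" unfolding blk_def
    by (rule the_equality) (use Z part_eq[OF assms(1)] in auto)
  thus "blk \<xi> i \<in> \<xi>" "i \<in> blk \<xi> i" using Z by auto
qed

lemma blk_eq: assumes "partition_on L \<xi>" "Z \<in> \<xi>" "i \<in> Z" shows "blk \<xi> i = Z"
  unfolding blk_def by (rule the_equality) (use assms part_eq[OF assms(1)] in auto)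

lemma finite_cfg: "finite X \<Longrightarrow> finite (cfg d X)"
  unfolding cfg_def by (rule finite_PiE) auto

lemma restrict_cfg: "a \<in> cfg d L \<Longrightarrow> X \<subseteq> L \<Longrightarrow> restrict a X \<in> cfg d X"
  unfolding cfg_def by auto

lemma t1: assumes P: "partition_on L \<zeta>" and a: "a \<in> cfg d L"
  shows "(\<lambda>i. if i \<in> L then (\<lambda>Z\<in>\<zeta>. restrict a Z) (blk \<zeta> i) i else undefined) = a"
proof
  fix x show "(if x \<in> L then (\<lambda>Z\<in>\<zeta>. restrict a Z) (blk \<zeta> x) x else undefined) = a x"
  proof (cases "x \<in> L")
    case True thus ?thesis using blk[OF P True] by simp
  next
    case False thus ?thesis using PiE_arb[OF a[unfolded cfg_def] False] by simp
  qed
qed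

lemma t2: assumes P: "partition_on L \<zeta>" and g: "g \<in> PiE \<zeta> (cfg d)"
  shows "(\<lambda>Z\<in>\<zeta>. restrict (\<lambda>i. if i \<in> L then g (blk \<zeta> i) i else undefined) Z) = g"
proof
  fix Z show "(\<lambda>Z\<in>\<zeta>. restrict (\<lambda>i. if i \<in> L then g (blk \<zeta> i) i else undefined) Z) Z = g Z"
  proof (cases "Z \<in> \<zeta>")
    case True
    have gZ: "g Z \<in> cfg d Z" using g True by auto
    show ?thesis
    proof
      fix x show "(\<lambda>Z\<in>\<zeta>. restrict (\<lambda>i. if i \<in> L then g (blk \<zeta> i) i else undefined) Z) Z x = g Z x"
      proof (cases "x \<in> Z")
        case True2: True
        have "x \<in> L" using part_sub[OF P True] True2 by blast
        thus ?thesis using True True2 blk_eq[OF P True True2] by simp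
      next
        case False
        thus ?thesis using True PiE_arb[OF gZ[unfolded cfg_def] False] by simp
      qed
    qed
  next
    case False thus ?thesis using PiE_arb[OF g False] by simp
  qed
qed


lemma sum_fact:
  fixes h :: "nat set \<Rightarrow> (nat \<Rightarrow> nat) \<Rightarrow> 'c::comm_semiring_1"
  assumes P: "partition_on L \<zeta>" and fin: "finite L"
  shows "(\<Sum>a\<in>cfg d L. \<Prod>Z\<in>\<zeta>. h Z (restrict a Z)) = (\<Prod>Z\<in>\<zeta>. \<Sum>b\<in>cfg d Z. h Z b)"
proof -
  have fz: "finite \<zeta>" using finite_elements[OF fin P] .
  have fZ: "\<And>Z. Z \<in> \<zeta> \<Longrightarrow> finite Z" using part_sub[OF P] fin finite_subset by blast
  have e1: "(\<Prod>Z\<in>\<zeta>. \<Sum>b\<in>cfg d Z. h Z b) = (\<Sum>g\<in>PiE \<zeta> (cfg d). \<Prod>Z\<in>\<zeta>. h Z (g Z))"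
    by (rule prod_sum_PiE) (use fz fZ finite_cfg in auto)
  have e2: "(\<Sum>a\<in>cfg d L. \<Prod>Z\<in>\<zeta>. h Z (restrict a Z)) = (\<Sum>g\<in>PiE \<zeta> (cfg d). \<Prod>Z\<in>\<zeta>. h Z (g Z))"
  proof (rule sum.reindex_bij_witness[where j = "\<lambda>a. (\<lambda>Z\<in>\<zeta>. restrict a Z)"
        and i = "\<lambda>g. (\<lambda>i. if i \<in> L then g (blk \<zeta> i) i else undefined)"])
    fix a assume a: "a \<in> cfg d L"
    show "(\<lambda>i. if i \<in> L then (\<lambda>Z\<in>\<zeta>. restrict a Z) (blk \<zeta> i) i else undefined) = a"
      by (rule t1[OF P a])
    show "(\<lambda>Z\<in>\<zeta>. restrict a Z) \<in> PiE \<zeta> (cfg d)"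
      using restrict_cfg[OF a] part_sub[OF P] by auto
    show "(\<Prod>Z\<in>\<zeta>. h Z ((\<lambda>Z\<in>\<zeta>. restrict a Z) Z)) = (\<Prod>Z\<in>\<zeta>. h Z (restrict a Z))"
      by (rule prod.cong) auto
  next
    fix g assume g: "g \<in> PiE \<zeta> (cfg d)"
    show "(\<lambda>Z\<in>\<zeta>. restrict (\<lambda>i. if i \<in> L then g (blk \<zeta> i) i else undefined) Z) = g"
      by (rule t2[OF P g])
    show "(\<lambda>i. if i \<in> L then g (blk \<zeta> i) i else undefined) \<in> cfg d L"
      unfolding cfg_def
    proof (rule PiE_I)
      fix x assume x: "x \<in> L"
      have "g (blk \<zeta> x) \<in> cfg d (blk \<zeta> x)" using g blk[OF P x] by auto
      thus "(if x \<in> L then g (blk \<zeta> x) x else undefined) \<in> {..<d x}"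
        using x blk[OF P x] unfolding cfg_def by auto
    qed auto
  qed
  show ?thesis using e1 e2 by simp
qed


lemma refines_refl': "refines \<xi> \<xi>" unfolding refines_def by blast
lemma refines_trans': "refines a b \<Longrightarrow> refines b c \<Longrightarrow> refines a c"
  unfolding refines_def by (meson order_trans)

definition down :: "nat \<Rightarrow> nat set set \<Rightarrow> nat set set set" where
  "down n \<mu> = {\<xi> \<in> PI n. refines \<xi> \<mu>}"

lemma down_PII: "\<mu> \<in> PI n \<Longrightarrow> down n \<mu> \<in> PII n"
  unfolding PII_def down_def using refines_refl' refines_trans' by blast

lemma mem_down: "\<mu> \<in> PI n \<Longrightarrow> \<mu> \<in> down n \<mu>"
  unfolding down_def using refines_refl' by blast

lemma down_sub: "S \<in> PII n \<Longrightarrow> \<mu> \<in> S \<Longrightarrow> down n \<mu> \<subseteq> S"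
  unfolding PII_def down_def by blast

definition botp :: "nat \<Rightarrow> nat set set" where "botp n = (\<lambda>i. {i}) ` Lset n"

lemma botp_PI: "botp n \<in> PI n"
  unfolding PI_def botp_def by (simp add: partition_on_singletons)

lemma botp_ref: "\<xi> \<in> PI n \<Longrightarrow> refines (botp n) \<xi>"
  unfolding refines_def botp_def PI_def using partition_onD1 by fastforce

lemma botp_in: "S \<in> PII n \<Longrightarrow> botp n \<in> S"
  unfolding PII_def using botp_ref botp_PI by blast

definition rep :: "nat \<Rightarrow> nat set set set set \<Rightarrow> nat set set \<Rightarrow> bool" where
  "rep n \<Xi> \<mu> \<longleftrightarrow> \<mu> \<in> PI n \<and> (\<forall>S\<in>PII n. S \<in> \<Xi> \<longleftrightarrow> \<mu> \<in> S)"

lemma rep_imp_rhs: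
  assumes X: "\<Xi> \<in> PIII n" and r: "rep n \<Xi> \<mu>"
  shows "\<Xi> = {U \<in> PII n. \<Inter>\<Xi> \<subseteq> U} \<and> PII n - \<Xi> = {U \<in> PII n. U \<subseteq> \<Union>(PII n - \<Xi>)}"
proof
  have mu: "\<mu> \<in> PI n" and rr: "\<And>S. S \<in> PII n \<Longrightarrow> S \<in> \<Xi> \<longleftrightarrow> \<mu> \<in> S" using r rep_def by auto
  have XP: "\<Xi> \<subseteq> PII n" using X PIII_def by auto
  have dX: "down n \<mu> \<in> \<Xi>" using rr[OF down_PII[OF mu]] mem_down[OF mu] by blast
  have I: "\<Inter>\<Xi> = down n \<mu>"
  proof
    show "\<Inter>\<Xi> \<subseteq> down n \<mu>" using dX by blast
    show "down n \<mu> \<subseteq> \<Inter>\<Xi>" using down_sub rr XP by blast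
  qed
  show "\<Xi> = {U \<in> PII n. \<Inter>\<Xi> \<subseteq> U}"
    unfolding I using XP rr down_sub mem_down[OF mu] by blast
  show "PII n - \<Xi> = {U \<in> PII n. U \<subseteq> \<Union>(PII n - \<Xi>)}"
    using rr by blast
qed

lemma rhs_imp_rep:
  assumes X: "\<Xi> \<in> PIII n"
    and e1: "\<Xi> = {U \<in> PII n. \<Inter>\<Xi> \<subseteq> U}" and e2: "PII n - \<Xi> = {U \<in> PII n. U \<subseteq> \<Union>(PII n - \<Xi>)}"
  shows "\<exists>\<mu>. rep n \<Xi> \<mu>"
proof -
  define Z where "Z = \<Inter>\<Xi>"
  have XP: "\<Xi> \<subseteq> PII n" and ne: "\<Xi> \<noteq> {}" using X PIII_def by auto
  have ZPI: "Z \<subseteq> PI n" using XP ne unfolding Z_def PII_def by blast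
  have bZ: "botp n \<in> Z" unfolding Z_def using XP botp_in by blast
  have ZPII: "Z \<in> PII n" using ZPI bZ XP unfolding PII_def Z_def by blast
  have ZX: "Z \<in> \<Xi>" using e1 ZPII unfolding Z_def by blast
  show ?thesis
  proof (cases "\<exists>\<xi>\<in>Z. Z \<subseteq> down n \<xi>")
    case True
    then obtain \<mu> where mZ: "\<mu> \<in> Z" and Zd: "Z \<subseteq> down n \<mu>" by blast
    have mu: "\<mu> \<in> PI n" using mZ ZPI by blast
    have "rep n \<Xi> \<mu>" unfolding rep_def
    proof (intro conjI ballI mu)
      fix S assume S: "S \<in> PII n"
      have "S \<in> \<Xi> \<longleftrightarrow> Z \<subseteq> S" using e1 S unfolding Z_def by blast
      also have "\<dots> \<longleftrightarrow> \<mu> \<in> S" using mZ Zd down_sub[OF S] by blast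
      finally show "S \<in> \<Xi> \<longleftrightarrow> \<mu> \<in> S" .
    qed
    thus ?thesis by blast
  next
    case False
    have "Z \<subseteq> \<Union>(PII n - \<Xi>)"
    proof
      fix \<xi> assume x: "\<xi> \<in> Z"
      have xi: "\<xi> \<in> PI n" using x ZPI by blast
      have "down n \<xi> \<notin> \<Xi>" using False x unfolding Z_def by blast
      thus "\<xi> \<in> \<Union>(PII n - \<Xi>)" using down_PII[OF xi] mem_down[OF xi] by blast
    qed
    hence "Z \<in> PII n - \<Xi>" using e2 ZPII by blast
    thus ?thesis using ZX by blast
  qed
qed


definition fill :: "(nat \<Rightarrow> nat) \<Rightarrow> nat set \<Rightarrow> (nat \<Rightarrow> nat) \<Rightarrow> (nat \<Rightarrow> nat)" where
  "fill a Z e = (\<lambda>i. if i \<in> Z then a i else e i)"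

lemma fill_cfg: assumes "Z \<subseteq> L" "\<And>i. i \<in> Z \<Longrightarrow> a i < d i" "e \<in> cfg d L"
  shows "fill a Z e \<in> cfg d L"
  unfolding cfg_def fill_def
proof (rule PiE_I)
  fix x assume "x \<in> L" thus "(if x \<in> Z then a x else e x) \<in> {..<d x}"
    using assms unfolding cfg_def by auto
next
  fix x assume x: "x \<notin> L"
  hence "x \<notin> Z" using assms(1) by blast
  thus "(if x \<in> Z then a x else e x) = undefined"
    using PiE_arb[OF assms(3)[unfolded cfg_def] x] by simp
qed

lemma fill_cfg1: "a \<in> cfg d L \<Longrightarrow> e \<in> cfg d L \<Longrightarrow> Z \<subseteq> L \<Longrightarrow> fill a Z e \<in> cfg d L"
  by (rule fill_cfg) (auto simp: cfg_def)

lemma fill_cfg2: "a \<in> cfg d Z \<Longrightarrow> e \<in> cfg d L \<Longrightarrow> Z \<subseteq> L \<Longrightarrow> fill a Z e \<in> cfg d L"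
  by (rule fill_cfg) (auto simp: cfg_def)

lemma restrict_fill_in: "restrict (fill a A e) A = restrict a A"
  unfolding fill_def by auto

lemma restrict_fill_out: "Y \<inter> A = {} \<Longrightarrow> restrict (fill a A e) Y = restrict e Y"
  unfolding fill_def by (auto simp: fun_eq_iff)

lemma fill_fill: "fill (fill a X e) Y e = fill a (X \<inter> Y) e"
  unfolding fill_def by auto

lemma fill_restrict: "fill (restrict a Z) Z e = fill a Z e"
  unfolding fill_def by auto

lemma fill_empty: "fill a {} e = e"
  unfolding fill_def by auto

lemma restrict_fill_self: "a \<in> cfg d Z \<Longrightarrow> restrict (fill a Z e) Z = a"
  unfolding cfg_def by (simp add: restrict_fill_in)

lemma fill_restrict_self: "fill (restrict e Z) Z e = e"
  unfolding fill_def by auto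

lemma psd_pullback:
  fixes K :: "'a \<Rightarrow> 'a \<Rightarrow> complex" and f :: "'b \<Rightarrow> 'a"
  assumes T: "finite T" and fS: "f ` S \<subseteq> T" and inj: "inj_on f S"
    and psd: "\<And>w. 0 \<le> (\<Sum>x\<in>T. \<Sum>y\<in>T. cnj (w x) * K x y * w y)"
  shows "0 \<le> (\<Sum>a\<in>S. \<Sum>b\<in>S. cnj (v a) * K (f a) (f b) * v b)"
proof -
  define w where "w x = (if x \<in> f ` S then v (inv_into S f x) else 0)" for x
  have fin: "finite (f ` S)" using T fS finite_subset by blast
  have wf: "\<And>a. a \<in> S \<Longrightarrow> w (f a) = v a" unfolding w_def using inj by auto
  have "(\<Sum>x\<in>T. \<Sum>y\<in>T. cnj (w x) * K x y * w y) = (\<Sum>x\<in>f ` S. \<Sum>y\<in>T. cnj (w x) * K x y * w y)"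
    by (rule sum.mono_neutral_right[OF T fS]) (auto simp: w_def)
  also have "\<dots> = (\<Sum>x\<in>f ` S. \<Sum>y\<in>f ` S. cnj (w x) * K x y * w y)"
    by (rule sum.cong[OF refl], rule sum.mono_neutral_right[OF T fS]) (auto simp: w_def)
  also have "\<dots> = (\<Sum>a\<in>S. \<Sum>b\<in>S. cnj (w (f a)) * K (f a) (f b) * w (f b))"
    by (simp add: sum.reindex[OF inj])
  also have "\<dots> = (\<Sum>a\<in>S. \<Sum>b\<in>S. cnj (v a) * K (f a) (f b) * v b)"
    by (rule sum.cong[OF refl], rule sum.cong[OF refl]) (simp add: wf)
  finally show ?thesis using psd[of w] by simp
qed

lemma psd_diag:
  fixes K :: "'a \<Rightarrow> 'a \<Rightarrow> complex"
  assumes T: "finite T" and c: "c \<in> T"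
    and psd: "\<And>w. 0 \<le> (\<Sum>x\<in>T. \<Sum>y\<in>T. cnj (w x) * K x y * w y)"
  shows "0 \<le> K c c"
proof -
  define v where "v z = (if z = c then 1 else (0::complex))" for z
  have e: "\<And>x y. cnj (v x) * K x y * v y = (if x = c then (if y = c then K c c else 0) else 0)"
    by (simp add: v_def)
  have "(\<Sum>x\<in>T. \<Sum>y\<in>T. cnj (v x) * K x y * v y) = (\<Sum>x\<in>T. if x = c then (\<Sum>y\<in>T. if y = c then K c c else 0) else 0)"
    unfolding e by (rule sum.cong) auto
  also have "\<dots> = K c c" using T c by simp
  finally show ?thesis using psd[of v] by simp
qed

lemma cdiv_nonneg: assumes "0 \<le> (x::complex)" "0 < t" shows "0 \<le> x / t"
proof -
  have "Im x = 0" "Im t = 0" "Re x \<ge> 0" "Re t > 0" using assms by (auto simp: less_eq_complex_def less_complex_def)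
  hence "x = of_real (Re x)" "t = of_real (Re t)" by (simp_all add: complex_eq_iff)
  hence "x / t = of_real (Re x / Re t)" by (metis of_real_divide)
  thus ?thesis using \<open>Re x \<ge> 0\<close> \<open>Re t > 0\<close> by (simp add: less_eq_complex_def)
qed


definition prodrep :: "(nat \<Rightarrow> nat) \<Rightarrow> nat \<Rightarrow> nat set set \<Rightarrow> op \<Rightarrow> (nat set \<Rightarrow> op) \<Rightarrow> bool" where
  "prodrep d n \<xi> \<rho> r \<longleftrightarrow> (\<forall>a\<in>cfg d (Lset n). \<forall>b\<in>cfg d (Lset n).
      \<rho> a b = (\<Prod>X\<in>\<xi>. r X (restrict a X) (restrict b X)))"

lemma unc_prodrep: "\<rho> \<in> unc d n \<xi> \<Longrightarrow> \<exists>r. (\<forall>X\<in>\<xi>. r X \<in> Dens d X) \<and> prodrep d n \<xi> \<rho> r"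
  unfolding unc_def prodrep_def by auto

lemma finL: "finite (Lset n)" unfolding Lset_def by simp

lemma PI_fin: "\<xi> \<in> PI n \<Longrightarrow> finite \<xi>"
  unfolding PI_def using finite_elements[OF finL] by blast

lemma PI_part: "\<xi> \<in> PI n \<Longrightarrow> partition_on (Lset n) \<xi>"
  unfolding PI_def by blast

lemma prod_split:
  assumes xi: "\<xi> \<in> PI n" and A: "A \<in> \<xi>" and pr: "prodrep d n \<xi> \<rho> r"
    and a: "a \<in> cfg d (Lset n)" and b: "b \<in> cfg d (Lset n)"
    and a': "a' \<in> cfg d (Lset n)" and b': "b' \<in> cfg d (Lset n)"
  shows "\<rho> (fill a A a') (fill b A b') = r A (restrict a A) (restrict b A) *
           (\<Prod>Y\<in>\<xi>-{A}. r Y (restrict a' Y) (restrict b' Y))"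
proof -
  have P: "partition_on (Lset n) \<xi>" using PI_part[OF xi] .
  have AL: "A \<subseteq> Lset n" using part_sub[OF P A] .
  have f1: "fill a A a' \<in> cfg d (Lset n)" "fill b A b' \<in> cfg d (Lset n)"
    using fill_cfg1 a b a' b' AL by auto
  have "\<rho> (fill a A a') (fill b A b') = (\<Prod>X\<in>\<xi>. r X (restrict (fill a A a') X) (restrict (fill b A b') X))"
    using pr f1 unfolding prodrep_def by blast
  also have "\<dots> = r A (restrict (fill a A a') A) (restrict (fill b A b') A) *
      (\<Prod>X\<in>\<xi>-{A}. r X (restrict (fill a A a') X) (restrict (fill b A b') X))"
    by (rule prod.remove[OF PI_fin[OF xi] A])
  also have "(\<Prod>X\<in>\<xi>-{A}. r X (restrict (fill a A a') X) (restrict (fill b A b') X)) =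
      (\<Prod>Y\<in>\<xi>-{A}. r Y (restrict a' Y) (restrict b' Y))"
  proof (rule prod.cong[OF refl])
    fix Y assume Y: "Y \<in> \<xi> - {A}"
    have "Y \<inter> A = {}" using part_eq[OF P _ A] Y by blast
    thus "r Y (restrict (fill a A a') Y) (restrict (fill b A b') Y) = r Y (restrict a' Y) (restrict b' Y)"
      by (simp add: restrict_fill_out)
  qed
  finally show ?thesis by (simp only: restrict_fill_in)
qed

lemma fill_same: "fill a A a = a" unfolding fill_def by auto

lemma swap:
  assumes xi: "\<xi> \<in> PI n" and A: "A \<in> \<xi>" and pr: "prodrep d n \<xi> \<rho> r"
    and a: "a \<in> cfg d (Lset n)" and b: "b \<in> cfg d (Lset n)"
    and a': "a' \<in> cfg d (Lset n)" and b': "b' \<in> cfg d (Lset n)"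
  shows "\<rho> (fill a A a') (fill b A b') * \<rho> (fill a' A a) (fill b' A b) = \<rho> a b * \<rho> a' b'"
proof -
  note s = prod_split[OF xi A pr]
  have "\<rho> a b = \<rho> (fill a A a) (fill b A b)" by (simp add: fill_same)
  also have "\<dots> = r A (restrict a A) (restrict b A) * (\<Prod>Y\<in>\<xi>-{A}. r Y (restrict a Y) (restrict b Y))"
    using s[OF a b a b] .
  finally have 1: "\<rho> a b = \<dots>" .
  have "\<rho> a' b' = \<rho> (fill a' A a') (fill b' A b')" by (simp add: fill_same)
  also have "\<dots> = r A (restrict a' A) (restrict b' A) * (\<Prod>Y\<in>\<xi>-{A}. r Y (restrict a' Y) (restrict b' Y))"
    using s[OF a' b' a' b'] .
  finally have 2: "\<rho> a' b' = \<dots>" .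
  show ?thesis using 1 2 s[OF a b a' b'] s[OF a' b' a b] by (simp add: algebra_simps)
qed

lemma fill_ident:
  assumes xi: "\<xi> \<in> PI n" and pr: "prodrep d n \<xi> \<rho> r"
    and e: "e \<in> cfg d (Lset n)" and E: "\<rho> e e \<noteq> 0"
    and a: "a \<in> cfg d (Lset n)" and b: "b \<in> cfg d (Lset n)"
  shows "\<rho> a b / \<rho> e e = (\<Prod>X\<in>\<xi>. \<rho> (fill a X e) (fill b X e) / \<rho> e e)"
proof -
  have "(\<Prod>X\<in>\<xi>. \<rho> (fill a X e) (fill b X e) / \<rho> e e) =
        (\<Prod>X\<in>\<xi>. r X (restrict a X) (restrict b X) / r X (restrict e X) (restrict e X))"
  proof (rule prod.cong[OF refl])
    fix X assume X: "X \<in> \<xi>"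
    note s = prod_split[OF xi X pr]
    have 1: "\<rho> (fill a X e) (fill b X e) = r X (restrict a X) (restrict b X) * (\<Prod>Y\<in>\<xi>-{X}. r Y (restrict e Y) (restrict e Y))"
      using s[OF a b e e] .
    have 2: "\<rho> e e = r X (restrict e X) (restrict e X) * (\<Prod>Y\<in>\<xi>-{X}. r Y (restrict e Y) (restrict e Y))"
      using s[OF e e e e] by (simp add: fill_same)
    show "\<rho> (fill a X e) (fill b X e) / \<rho> e e = r X (restrict a X) (restrict b X) / r X (restrict e X) (restrict e X)"
      using E unfolding 1 2 by (simp add: field_simps)
  qed
  also have "\<dots> = (\<Prod>X\<in>\<xi>. r X (restrict a X) (restrict b X)) / (\<Prod>X\<in>\<xi>. r X (restrict e X) (restrict e X))"
    by (rule prod_dividef)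
  also have "\<dots> = \<rho> a b / \<rho> e e" using pr a b e unfolding prodrep_def by simp
  finally show ?thesis by simp
qed


definition meet :: "nat set set \<Rightarrow> nat set set \<Rightarrow> nat set set" where
  "meet \<xi> \<eta> = (\<lambda>(X,Y). X \<inter> Y) ` (\<xi> \<times> \<eta>) - {{}}"

lemma meet_PI: assumes x: "\<xi> \<in> PI n" and y: "\<eta> \<in> PI n" shows "meet \<xi> \<eta> \<in> PI n"
proof -
  have P: "partition_on (Lset n) \<xi>" "partition_on (Lset n) \<eta>" using x y PI_part by auto
  have "partition_on (Lset n) (meet \<xi> \<eta>)"
  proof (rule partition_onI)
    show "\<Union>(meet \<xi> \<eta>) = Lset n"
    proof
      show "\<Union>(meet \<xi> \<eta>) \<subseteq> Lset n" unfolding meet_def using part_sub[OF P(1)] by blast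
      show "Lset n \<subseteq> \<Union>(meet \<xi> \<eta>)"
      proof
        fix i assume i: "i \<in> Lset n"
        obtain X Y where "X \<in> \<xi>" "Y \<in> \<eta>" "i \<in> X" "i \<in> Y" using part_ex[OF P(1) i] part_ex[OF P(2) i] by blast
        thus "i \<in> \<Union>(meet \<xi> \<eta>)" unfolding meet_def by blast
      qed
    qed
  next
    fix p q assume p: "p \<in> meet \<xi> \<eta>" and q: "q \<in> meet \<xi> \<eta>" and pq: "p \<noteq> q"
    obtain X Y where XY: "X \<in> \<xi>" "Y \<in> \<eta>" "p = X \<inter> Y" using p unfolding meet_def by blast
    obtain X' Y' where XY': "X' \<in> \<xi>" "Y' \<in> \<eta>" "q = X' \<inter> Y'" using q unfolding meet_def by blast
    show "disjnt p q"
    proof (rule ccontr)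
      assume "\<not> disjnt p q"
      then obtain i where "i \<in> p" "i \<in> q" by (auto simp: disjnt_def)
      hence "X = X'" "Y = Y'" using part_eq[OF P(1) XY(1) XY'(1)] part_eq[OF P(2) XY(2) XY'(2)] XY XY' by auto
      thus False using pq XY XY' by simp
    qed
  next
    show "{} \<notin> meet \<xi> \<eta>" unfolding meet_def by blast
  qed
  thus ?thesis unfolding PI_def by blast
qed

lemma meet_elem: "p \<in> meet \<xi> \<eta> \<Longrightarrow> \<exists>X\<in>\<xi>. \<exists>Y\<in>\<eta>. p = X \<inter> Y"
  unfolding meet_def by auto
lemma meet_ref1: "refines (meet \<xi> \<eta>) \<xi>" unfolding refines_def
  using meet_elem by (metis Int_lower1)
lemma meet_ref2: "refines (meet \<xi> \<eta>) \<eta>" unfolding refines_def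
  using meet_elem by (metis Int_lower2)


lemma meet_ident:
  fixes G :: "(nat \<Rightarrow> nat) \<Rightarrow> (nat \<Rightarrow> nat) \<Rightarrow> complex"
  assumes x: "\<xi> \<in> PI n" and y: "\<eta> \<in> PI n" and e: "e \<in> cfg d (Lset n)" and G1: "G e e = 1"
    and hx: "\<And>a b. a \<in> cfg d (Lset n) \<Longrightarrow> b \<in> cfg d (Lset n) \<Longrightarrow> G a b = (\<Prod>X\<in>\<xi>. G (fill a X e) (fill b X e))"
    and hy: "\<And>a b. a \<in> cfg d (Lset n) \<Longrightarrow> b \<in> cfg d (Lset n) \<Longrightarrow> G a b = (\<Prod>Y\<in>\<eta>. G (fill a Y e) (fill b Y e))"
    and a: "a \<in> cfg d (Lset n)" and b: "b \<in> cfg d (Lset n)"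
  shows "G a b = (\<Prod>Z\<in>meet \<xi> \<eta>. G (fill a Z e) (fill b Z e))"
proof -
  have P: "partition_on (Lset n) \<xi>" "partition_on (Lset n) \<eta>" using x y PI_part by auto
  define F where "F Z = G (fill a Z e) (fill b Z e)" for Z
  have F0: "F {} = 1" unfolding F_def fill_empty G1 ..
  have fin: "finite (\<xi> \<times> \<eta>)" using PI_fin[OF x] PI_fin[OF y] by simp
  have "G a b = (\<Prod>X\<in>\<xi>. G (fill a X e) (fill b X e))" using hx[OF a b] .
  also have "\<dots> = (\<Prod>X\<in>\<xi>. \<Prod>Y\<in>\<eta>. F (X \<inter> Y))"
  proof (rule prod.cong[OF refl])
    fix X assume X: "X \<in> \<xi>"
    have XL: "X \<subseteq> Lset n" using part_sub[OF P(1) X] .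
    have "G (fill a X e) (fill b X e) = (\<Prod>Y\<in>\<eta>. G (fill (fill a X e) Y e) (fill (fill b X e) Y e))"
      using hy fill_cfg1[OF a e XL] fill_cfg1[OF b e XL] by blast
    thus "G (fill a X e) (fill b X e) = (\<Prod>Y\<in>\<eta>. F (X \<inter> Y))" unfolding F_def fill_fill .
  qed
  also have "\<dots> = (\<Prod>(X,Y)\<in>\<xi> \<times> \<eta>. F (X \<inter> Y))" by (rule prod.cartesian_product)
  also have "\<dots> = prod F ((\<lambda>(X,Y). X \<inter> Y) ` (\<xi> \<times> \<eta>))"
  proof -
    have "prod F ((\<lambda>(X,Y). X \<inter> Y) ` (\<xi> \<times> \<eta>)) = prod (F \<circ> (\<lambda>(X,Y). X \<inter> Y)) (\<xi> \<times> \<eta>)"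
    proof (rule prod.reindex_nontrivial[OF fin])
      fix p q assume p: "p \<in> \<xi> \<times> \<eta>" and q: "q \<in> \<xi> \<times> \<eta>" and pq: "p \<noteq> q"
        and h: "(case p of (X, Y) \<Rightarrow> X \<inter> Y) = (case q of (X, Y) \<Rightarrow> X \<inter> Y)"
      obtain X Y where p': "p = (X,Y)" "X \<in> \<xi>" "Y \<in> \<eta>" using p by auto
      obtain X' Y' where q': "q = (X',Y')" "X' \<in> \<xi>" "Y' \<in> \<eta>" using q by auto
      have h': "X \<inter> Y = X' \<inter> Y'" using h p' q' by simp
      have "X \<inter> Y = {}"
      proof (rule ccontr)
        assume "X \<inter> Y \<noteq> {}"
        then obtain i where i: "i \<in> X" "i \<in> Y" by blast
        hence "i \<in> X'" "i \<in> Y'" using h' by blast+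
        hence "X = X'" "Y = Y'" using part_eq[OF P(1) p'(2) q'(2)] part_eq[OF P(2) p'(3) q'(3)] i by auto
        thus False using pq p' q' by simp
      qed
      thus "F (case p of (X, Y) \<Rightarrow> X \<inter> Y) = 1" using p' F0 by simp
    qed
    also have "\<dots> = (\<Prod>(X,Y)\<in>\<xi> \<times> \<eta>. F (X \<inter> Y))"
      by (rule prod.cong) auto
    finally show ?thesis by simp
  qed
  also have "\<dots> = prod F (meet \<xi> \<eta>)"
    unfolding meet_def
  proof (rule prod.mono_neutral_left[symmetric])
    show "finite ((\<lambda>(X,Y). X \<inter> Y) ` (\<xi> \<times> \<eta>))" using fin by simp
    show "\<forall>i\<in>(\<lambda>(X,Y). X \<inter> Y) ` (\<xi> \<times> \<eta>) - ((\<lambda>(X,Y). X \<inter> Y) ` (\<xi> \<times> \<eta>) - {{}}). F i = 1"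
    proof
      fix i assume "i \<in> (\<lambda>(X,Y). X \<inter> Y) ` (\<xi> \<times> \<eta>) - ((\<lambda>(X,Y). X \<inter> Y) ` (\<xi> \<times> \<eta>) - {{}})"
      hence "i = {}" by blast
      thus "F i = 1" using F0 by simp
    qed
  qed (rule Diff_subset)
  finally show ?thesis unfolding F_def .
qed


lemma densD:
  assumes "\<rho> \<in> Dens d X"
  shows "\<And>a b. a \<notin> cfg d X \<or> b \<notin> cfg d X \<Longrightarrow> \<rho> a b = 0"
    and "\<And>v. 0 \<le> (\<Sum>a\<in>cfg d X. \<Sum>b\<in>cfg d X. cnj (v a) * \<rho> a b * v b)"
    and "(\<Sum>a\<in>cfg d X. \<rho> a a) = 1"
  using assms unfolding Dens_def is_density_def by auto

lemma slice_unc: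
  assumes z: "\<zeta> \<in> PI n" and D: "\<rho> \<in> Dens d (Lset n)" and e: "e \<in> cfg d (Lset n)" and E: "\<rho> e e \<noteq> 0"
    and ident: "\<And>a b. a \<in> cfg d (Lset n) \<Longrightarrow> b \<in> cfg d (Lset n) \<Longrightarrow>
        \<rho> a b / \<rho> e e = (\<Prod>Z\<in>\<zeta>. \<rho> (fill a Z e) (fill b Z e) / \<rho> e e)"
  shows "\<rho> \<in> unc d n \<zeta>"
proof -
  define L where "L = Lset n"
  have P: "partition_on L \<zeta>" using PI_part[OF z] L_def by simp
  have finL': "finite L" using finL L_def by simp
  have ZL: "\<And>Z. Z \<in> \<zeta> \<Longrightarrow> Z \<subseteq> L" using part_sub[OF P] .
  have finZ: "\<And>Z. Z \<in> \<zeta> \<Longrightarrow> finite (cfg d Z)" using ZL finL' finite_subset finite_cfg by metis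
  have fcL: "finite (cfg d L)" using finL' finite_cfg by blast
  note zero = densD(1)[OF D, folded L_def] and psd = densD(2)[OF D, folded L_def]
    and tr = densD(3)[OF D, folded L_def]
  have eL: "e \<in> cfg d L" using e L_def by simp
  define s where "s Z a' b' = \<rho> (fill a' Z e) (fill b' Z e)" for Z a' b'
  define t where "t Z = (\<Sum>a'\<in>cfg d Z. s Z a' a')" for Z
  define \<tau> where "\<tau> Z a' b' = (if a' \<in> cfg d Z \<and> b' \<in> cfg d Z then s Z a' b' / t Z else 0)" for Z a' b'
  have inj: "\<And>Z. inj_on (\<lambda>a'. fill a' Z e) (cfg d Z)"
    by (rule inj_onI) (metis restrict_fill_self)
  have img: "\<And>Z. Z \<in> \<zeta> \<Longrightarrow> (\<lambda>a'. fill a' Z e) ` cfg d Z \<subseteq> cfg d L"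
    using fill_cfg2[OF _ eL] ZL by blast
  have spsd: "\<And>Z v. Z \<in> \<zeta> \<Longrightarrow> 0 \<le> (\<Sum>a\<in>cfg d Z. \<Sum>b\<in>cfg d Z. cnj (v a) * s Z a b * v b)"
    unfolding s_def by (rule psd_pullback[OF fcL img inj psd])
  have diag: "\<And>c. c \<in> cfg d L \<Longrightarrow> 0 \<le> \<rho> c c" by (rule psd_diag[OF fcL _ psd])
  have Epos: "0 < \<rho> e e" using diag[OF eL] E by (simp add: order.not_eq_order_implies_strict)
  have tpos: "\<And>Z. Z \<in> \<zeta> \<Longrightarrow> 0 < t Z"
  proof -
    fix Z assume Z: "Z \<in> \<zeta>"
    have rz: "restrict e Z \<in> cfg d Z" using restrict_cfg[OF eL ZL[OF Z]] .
    have "s Z (restrict e Z) (restrict e Z) \<le> t Z" unfolding t_def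
    proof (rule member_le_sum[OF rz _ finZ[OF Z]])
      fix x assume "x \<in> cfg d Z - {restrict e Z}"
      hence "fill x Z e \<in> cfg d L" using img[OF Z] by blast
      thus "0 \<le> s Z x x" unfolding s_def by (rule diag)
    qed
    moreover have "s Z (restrict e Z) (restrict e Z) = \<rho> e e" unfolding s_def fill_restrict_self ..
    ultimately show "0 < t Z" using Epos by (metis order.strict_trans2)
  qed
  have tauD: "\<And>Z. Z \<in> \<zeta> \<Longrightarrow> \<tau> Z \<in> Dens d Z"
  proof -
    fix Z assume Z: "Z \<in> \<zeta>"
    have tn: "t Z \<noteq> 0" using tpos[OF Z] by auto
    have "is_density d Z (\<tau> Z)" unfolding is_density_def
    proof (intro conjI allI impI)
      fix a b assume "a \<notin> cfg d Z \<or> b \<notin> cfg d Z" thus "\<tau> Z a b = 0" unfolding \<tau>_def by auto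
    next
      fix v :: "(nat \<Rightarrow> nat) \<Rightarrow> complex"
      have "(\<Sum>a\<in>cfg d Z. \<Sum>b\<in>cfg d Z. cnj (v a) * \<tau> Z a b * v b) =
            (\<Sum>a\<in>cfg d Z. \<Sum>b\<in>cfg d Z. cnj (v a) * s Z a b * v b) / t Z"
        unfolding sum_divide_distrib \<tau>_def by (rule sum.cong[OF refl], rule sum.cong[OF refl]) auto
      thus "0 \<le> (\<Sum>a\<in>cfg d Z. \<Sum>b\<in>cfg d Z. cnj (v a) * \<tau> Z a b * v b)"
        using cdiv_nonneg[OF spsd[OF Z] tpos[OF Z]] by simp
    next
      have "(\<Sum>a\<in>cfg d Z. \<tau> Z a a) = (\<Sum>a\<in>cfg d Z. s Z a a) / t Z"
        unfolding sum_divide_distrib \<tau>_def by (rule sum.cong) auto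
      thus "(\<Sum>a\<in>cfg d Z. \<tau> Z a a) = 1" using tn unfolding t_def by simp
    qed
    thus "\<tau> Z \<in> Dens d Z" unfolding Dens_def by simp
  qed
  have fr: "\<And>a Z. fill a Z e = fill (restrict a Z) Z e" by (simp add: fill_restrict)
  have trace: "1 / \<rho> e e = (\<Prod>Z\<in>\<zeta>. t Z / \<rho> e e)"
  proof -
    have "1 / \<rho> e e = (\<Sum>a\<in>cfg d L. \<rho> a a / \<rho> e e)" unfolding sum_divide_distrib[symmetric] tr ..
    also have "\<dots> = (\<Sum>a\<in>cfg d L. \<Prod>Z\<in>\<zeta>. s Z (restrict a Z) (restrict a Z) / \<rho> e e)"
    proof (rule sum.cong[OF refl])
      fix a assume a: "a \<in> cfg d L"
      show "\<rho> a a / \<rho> e e = (\<Prod>Z\<in>\<zeta>. s Z (restrict a Z) (restrict a Z) / \<rho> e e)"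
        using ident[OF a[unfolded L_def] a[unfolded L_def]] unfolding s_def by (simp only: fill_restrict)
    qed
    also have "\<dots> = (\<Prod>Z\<in>\<zeta>. \<Sum>c\<in>cfg d Z. s Z c c / \<rho> e e)"
      by (rule sum_fact[OF P finL'])
    also have "\<dots> = (\<Prod>Z\<in>\<zeta>. t Z / \<rho> e e)" unfolding t_def by (simp add: sum_divide_distrib)
    finally show ?thesis .
  qed
  have prodeq: "\<And>a b. a \<in> cfg d L \<Longrightarrow> b \<in> cfg d L \<Longrightarrow> \<rho> a b = (\<Prod>Z\<in>\<zeta>. \<tau> Z (restrict a Z) (restrict b Z))"
  proof -
    fix a b assume a: "a \<in> cfg d L" and b: "b \<in> cfg d L"
    have "\<rho> a b = (\<rho> a b / \<rho> e e) / (1 / \<rho> e e)" using E by simp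
    also have "\<rho> a b / \<rho> e e = (\<Prod>Z\<in>\<zeta>. s Z (restrict a Z) (restrict b Z) / \<rho> e e)"
      using ident[OF a[unfolded L_def] b[unfolded L_def]] unfolding s_def by (simp only: fill_restrict)
    also note trace
    also have "(\<Prod>Z\<in>\<zeta>. s Z (restrict a Z) (restrict b Z) / \<rho> e e) / (\<Prod>Z\<in>\<zeta>. t Z / \<rho> e e) =
        (\<Prod>Z\<in>\<zeta>. (s Z (restrict a Z) (restrict b Z) / \<rho> e e) / (t Z / \<rho> e e))"
      by (rule prod_dividef[symmetric])
    also have "\<dots> = (\<Prod>Z\<in>\<zeta>. \<tau> Z (restrict a Z) (restrict b Z))"
    proof (rule prod.cong[OF refl])
      fix Z assume Z: "Z \<in> \<zeta>"
      have "restrict a Z \<in> cfg d Z" "restrict b Z \<in> cfg d Z" using restrict_cfg a b ZL[OF Z] by auto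
      thus "s Z (restrict a Z) (restrict b Z) / \<rho> e e / (t Z / \<rho> e e) = \<tau> Z (restrict a Z) (restrict b Z)"
        unfolding \<tau>_def using E by simp
    qed
    finally show "\<rho> a b = (\<Prod>Z\<in>\<zeta>. \<tau> Z (restrict a Z) (restrict b Z))" .
  qed
  show ?thesis unfolding unc_def
  proof (intro CollectI conjI exI[of _ \<tau>] D ballI allI tauD)
    fix a b
    show "\<rho> a b = (if a \<in> cfg d (Lset n) \<and> b \<in> cfg d (Lset n) then \<Prod>X\<in>\<zeta>. \<tau> X (restrict a X) (restrict b X) else 0)"
      using prodeq zero unfolding L_def by auto
  qed
qed


lemma unc_dens: "\<rho> \<in> unc d n \<xi> \<Longrightarrow> \<rho> \<in> Dens d (Lset n)" unfolding unc_def by blast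

lemma unc_meet:
  assumes x: "\<xi> \<in> PI n" and y: "\<eta> \<in> PI n" and rx: "\<rho> \<in> unc d n \<xi>" and ry: "\<rho> \<in> unc d n \<eta>"
  shows "\<rho> \<in> unc d n (meet \<xi> \<eta>)"
proof -
  obtain r where r: "prodrep d n \<xi> \<rho> r" using unc_prodrep[OF rx] by blast
  obtain r' where r': "prodrep d n \<eta> \<rho> r'" using unc_prodrep[OF ry] by blast
  have D: "\<rho> \<in> Dens d (Lset n)" using unc_dens[OF rx] .
  obtain e where e: "e \<in> cfg d (Lset n)" and E: "\<rho> e e \<noteq> 0"
  proof (rule ccontr)
    assume "\<not> thesis"
    hence "\<forall>e\<in>cfg d (Lset n). \<rho> e e = 0" using that by blast
    hence "(\<Sum>a\<in>cfg d (Lset n). \<rho> a a) = 0" by simp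
    thus False using densD(3)[OF D] by simp
  qed
  have E1: "\<rho> e e / \<rho> e e = 1" using E by simp
  have hx: "\<And>a b. a \<in> cfg d (Lset n) \<Longrightarrow> b \<in> cfg d (Lset n) \<Longrightarrow>
      \<rho> a b / \<rho> e e = (\<Prod>Z\<in>\<xi>. \<rho> (fill a Z e) (fill b Z e) / \<rho> e e)"
    by (rule fill_ident[OF x r e, OF E])
  have hy: "\<And>a b. a \<in> cfg d (Lset n) \<Longrightarrow> b \<in> cfg d (Lset n) \<Longrightarrow>
      \<rho> a b / \<rho> e e = (\<Prod>Z\<in>\<eta>. \<rho> (fill a Z e) (fill b Z e) / \<rho> e e)"
    by (rule fill_ident[OF y r' e, OF E])
  have ident: "\<And>a b. a \<in> cfg d (Lset n) \<Longrightarrow> b \<in> cfg d (Lset n) \<Longrightarrow>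
      \<rho> a b / \<rho> e e = (\<Prod>Z\<in>meet \<xi> \<eta>. \<rho> (fill a Z e) (fill b Z e) / \<rho> e e)"
  proof -
    fix a b assume a: "a \<in> cfg d (Lset n)" and b: "b \<in> cfg d (Lset n)"
    show "\<rho> a b / \<rho> e e = (\<Prod>Z\<in>meet \<xi> \<eta>. \<rho> (fill a Z e) (fill b Z e) / \<rho> e e)"
      by (rule meet_ident[of \<xi> n \<eta> e d "\<lambda>a b. \<rho> a b / \<rho> e e", OF x y e E1 hx hy a b])
  qed
  show ?thesis by (rule slice_unc[OF meet_PI[OF x y] D e, OF E ident])
qed

lemma PI_finite: "finite (PI n)" unfolding PI_def using finitely_many_partition_on[OF finL] .

lemma least_exists:
  assumes "finite F" "F \<noteq> {}" "F \<subseteq> {\<xi> \<in> PI n. \<rho> \<in> unc d n \<xi>}"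
  shows "\<exists>m\<in>{\<xi> \<in> PI n. \<rho> \<in> unc d n \<xi>}. \<forall>\<xi>\<in>F. refines m \<xi>"
  using assms
proof (induction F rule: finite_ne_induct)
  case (singleton x) thus ?case using refines_refl' by blast
next
  case (insert x F)
  then obtain m where m: "m \<in> PI n" "\<rho> \<in> unc d n m" "\<forall>\<xi>\<in>F. refines m \<xi>" by auto
  have x: "x \<in> PI n" "\<rho> \<in> unc d n x" using insert by auto
  have "meet x m \<in> {\<xi> \<in> PI n. \<rho> \<in> unc d n \<xi>}" using meet_PI[OF x(1) m(1)] unc_meet[OF x(1) m(1) x(2) m(2)] by blast
  moreover have "\<forall>\<xi>\<in>insert x F. refines (meet x m) \<xi>"
    using meet_ref1[of x m] meet_ref2[of x m] m(3) refines_trans' by blast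
  ultimately show ?case by blast
qed

lemma cunc_rep:
  assumes X: "\<Xi> \<in> PIII n" and c: "\<rho> \<in> Cunc d n \<Xi>"
  shows "\<exists>\<mu>. rep n \<Xi> \<mu>"
proof -
  have XP: "\<Xi> \<subseteq> PII n" and ne: "\<Xi> \<noteq> {}" using X PIII_def by auto
  have hin: "\<And>S. S \<in> \<Xi> \<Longrightarrow> \<rho> \<in> Sunc d n S" using c unfolding Cunc_def by blast
  have hout: "\<And>S. S \<in> PII n - \<Xi> \<Longrightarrow> \<rho> \<notin> Sunc d n S" using c unfolding Cunc_def by blast
  define Up where "Up = {\<xi> \<in> PI n. \<rho> \<in> unc d n \<xi>}"
  have Sunc_iff: "\<And>S. S \<in> PII n \<Longrightarrow> \<rho> \<in> Sunc d n S \<longleftrightarrow> (\<exists>\<xi>\<in>S. \<xi> \<in> Up)"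
    unfolding Sunc_def Up_def PII_def by blast
  obtain S0 where S0: "S0 \<in> \<Xi>" using ne by blast
  have "Up \<noteq> {}" using hin[OF S0] Sunc_iff XP S0 by blast
  moreover have "finite Up" unfolding Up_def using PI_finite by simp
  ultimately obtain \<mu> where mu: "\<mu> \<in> Up" "\<forall>\<xi>\<in>Up. refines \<mu> \<xi>"
    using least_exists[of Up] unfolding Up_def by blast
  have muPI: "\<mu> \<in> PI n" using mu Up_def by simp
  have "rep n \<Xi> \<mu>" unfolding rep_def
  proof (intro conjI ballI muPI)
    fix S assume S: "S \<in> PII n"
    show "S \<in> \<Xi> \<longleftrightarrow> \<mu> \<in> S"
    proof
      assume "S \<in> \<Xi>"
      then obtain \<xi> where "\<xi> \<in> S" "\<xi> \<in> Up" using hin Sunc_iff S by blast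
      thus "\<mu> \<in> S" using mu(2) muPI S unfolding PII_def by blast
    next
      assume "\<mu> \<in> S"
      hence "\<rho> \<in> Sunc d n S" using Sunc_iff[OF S] mu by blast
      thus "S \<in> \<Xi>" using hout S by blast
    qed
  qed
  thus ?thesis by blast
qed


definition c0 :: "nat set \<Rightarrow> (nat \<Rightarrow> nat)" where "c0 X = restrict (\<lambda>_. 0) X"
definition c1 :: "nat set \<Rightarrow> (nat \<Rightarrow> nat)" where "c1 X = restrict (\<lambda>_. 1) X"
definition phi :: "nat set \<Rightarrow> (nat \<Rightarrow> nat) \<Rightarrow> complex" where
  "phi X a = (if a = c0 X \<or> a = c1 X then of_real (1 / sqrt 2) else 0)"
definition psi :: "nat set set \<Rightarrow> (nat \<Rightarrow> nat) \<Rightarrow> complex" where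
  "psi \<mu> a = (\<Prod>X\<in>\<mu>. phi X (restrict a X))"
definition pure :: "(nat \<Rightarrow> nat) \<Rightarrow> nat set \<Rightarrow> ((nat \<Rightarrow> nat) \<Rightarrow> complex) \<Rightarrow> op" where
  "pure d X f a b = (if a \<in> cfg d X \<and> b \<in> cfg d X then f a * cnj (f b) else 0)"

lemma cnj_mult_self_nonneg: "0 \<le> cnj z * z"
proof -
  have "cnj z * z = of_real (norm z ^ 2)" by (metis complex_norm_square mult.commute)
  thus ?thesis by (simp add: less_eq_complex_def)
qed

lemma pure_dens:
  assumes fin: "finite (cfg d X)" and tr: "(\<Sum>a\<in>cfg d X. f a * cnj (f a)) = 1"
  shows "pure d X f \<in> Dens d X"
  unfolding Dens_def is_density_def
proof (intro CollectI conjI allI impI)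
  fix a b assume "a \<notin> cfg d X \<or> b \<notin> cfg d X" thus "pure d X f a b = 0" unfolding pure_def by auto
next
  fix v :: "(nat \<Rightarrow> nat) \<Rightarrow> complex"
  define T where "T = (\<Sum>b\<in>cfg d X. cnj (f b) * v b)"
  have "(\<Sum>a\<in>cfg d X. \<Sum>b\<in>cfg d X. cnj (v a) * pure d X f a b * v b) =
        (\<Sum>a\<in>cfg d X. \<Sum>b\<in>cfg d X. (cnj (v a) * f a) * (cnj (f b) * v b))"
    unfolding pure_def by (rule sum.cong[OF refl], rule sum.cong[OF refl]) (simp add: algebra_simps)
  also have "\<dots> = (\<Sum>a\<in>cfg d X. cnj (v a) * f a) * T"
    unfolding T_def by (simp add: sum_product)
  also have "(\<Sum>a\<in>cfg d X. cnj (v a) * f a) = cnj T"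
    unfolding T_def cnj_sum by (rule sum.cong) (simp_all add: mult.commute)
  finally have "(\<Sum>a\<in>cfg d X. \<Sum>b\<in>cfg d X. cnj (v a) * pure d X f a b * v b) = cnj T * T" .
  thus "0 \<le> (\<Sum>a\<in>cfg d X. \<Sum>b\<in>cfg d X. cnj (v a) * pure d X f a b * v b)"
    using cnj_mult_self_nonneg by simp
next
  show "(\<Sum>a\<in>cfg d X. pure d X f a a) = 1" using tr unfolding pure_def by simp
qed

lemma c01_cfg: assumes "\<forall>i\<in>X. 1 < d i" shows "c0 X \<in> cfg d X" "c1 X \<in> cfg d X"
  using assms unfolding c0_def c1_def cfg_def by auto

lemma c01_ne: "X \<noteq> {} \<Longrightarrow> c0 X \<noteq> c1 X"
  unfolding c0_def c1_def by (metis ex_in_conv restrict_apply' zero_neq_one)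

lemma phi_sq: "phi X a * cnj (phi X a) = (if a = c0 X \<or> a = c1 X then 1/2 else 0)"
proof -
  have r: "(1 / sqrt 2) * (1 / sqrt 2) = (1/2 :: real)" by simp
  have "of_real (1 / sqrt 2) * cnj (of_real (1 / sqrt 2)) = (of_real ((1 / sqrt 2) * (1 / sqrt 2)) :: complex)"
    by (simp only: complex_cnj_complex_of_real of_real_mult)
  hence "of_real (1 / sqrt 2) * cnj (of_real (1 / sqrt 2)) = (1/2 :: complex)" unfolding r by simp
  thus ?thesis unfolding phi_def by simp
qed

lemma phi_tr:
  assumes "\<forall>i\<in>X. 1 < d i" "X \<noteq> {}" "finite X"
  shows "(\<Sum>a\<in>cfg d X. phi X a * cnj (phi X a)) = 1"
proof -
  have fin: "finite (cfg d X)" using finite_cfg assms(3) .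
  have "(\<Sum>a\<in>cfg d X. phi X a * cnj (phi X a)) = (\<Sum>a\<in>cfg d X. if a \<in> {c0 X, c1 X} then 1/2 else 0)"
    unfolding phi_sq by simp
  also have "\<dots> = (\<Sum>a\<in>cfg d X \<inter> {c0 X, c1 X}. 1/2)" by (rule sum.inter_restrict[OF fin, symmetric])
  also have "cfg d X \<inter> {c0 X, c1 X} = {c0 X, c1 X}" using c01_cfg[OF assms(1)] by blast
  also have "(\<Sum>a\<in>{c0 X, c1 X}. (1/2::complex)) = 1" using c01_ne[OF assms(2)] by simp
  finally show ?thesis .
qed

lemma psi_sq: "psi \<mu> a * cnj (psi \<mu> a) = (\<Prod>X\<in>\<mu>. phi X (restrict a X) * cnj (phi X (restrict a X)))"
  unfolding psi_def cnj_prod prod.distrib ..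

lemma psi_tr:
  assumes mu: "\<mu> \<in> PI n" and dd: "\<forall>i\<in>Lset n. 1 < d i"
  shows "(\<Sum>a\<in>cfg d (Lset n). psi \<mu> a * cnj (psi \<mu> a)) = 1"
proof -
  have P: "partition_on (Lset n) \<mu>" using PI_part[OF mu] .
  have "(\<Sum>a\<in>cfg d (Lset n). psi \<mu> a * cnj (psi \<mu> a)) =
      (\<Sum>a\<in>cfg d (Lset n). \<Prod>X\<in>\<mu>. phi X (restrict a X) * cnj (phi X (restrict a X)))"
    unfolding psi_sq ..
  also have "\<dots> = (\<Prod>X\<in>\<mu>. \<Sum>b\<in>cfg d X. phi X b * cnj (phi X b))"
    by (rule sum_fact[OF P finL])
  also have "\<dots> = (\<Prod>X\<in>\<mu>. 1)"
  proof (rule prod.cong[OF refl])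
    fix X assume X: "X \<in> \<mu>"
    have XL: "X \<subseteq> Lset n" using part_sub[OF P X] .
    show "(\<Sum>b\<in>cfg d X. phi X b * cnj (phi X b)) = 1"
    proof (rule phi_tr)
      show "\<forall>i\<in>X. 1 < d i" using dd XL by blast
      show "X \<noteq> {}" using partition_onD3[OF P] X by blast
      show "finite X" using finL XL finite_subset by blast
    qed
  qed
  finally show ?thesis by simp
qed

lemma rhoG_unc:
  assumes mu: "\<mu> \<in> PI n" and dd: "\<forall>i\<in>Lset n. 1 < d i"
  shows "pure d (Lset n) (psi \<mu>) \<in> unc d n \<mu>"
proof -
  have P: "partition_on (Lset n) \<mu>" using PI_part[OF mu] .
  have D: "pure d (Lset n) (psi \<mu>) \<in> Dens d (Lset n)"
    by (rule pure_dens[OF finite_cfg[OF finL] psi_tr[OF mu dd]])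
  have F: "\<forall>X\<in>\<mu>. pure d X (phi X) \<in> Dens d X"
  proof
    fix X assume X: "X \<in> \<mu>"
    have XL: "X \<subseteq> Lset n" using part_sub[OF P X] .
    have fX: "finite X" using finL XL finite_subset by blast
    show "pure d X (phi X) \<in> Dens d X"
    proof (rule pure_dens[OF finite_cfg[OF fX]], rule phi_tr[OF _ _ fX])
      show "\<forall>i\<in>X. 1 < d i" using dd XL by blast
      show "X \<noteq> {}" using partition_onD3[OF P] X by blast
    qed
  qed
  show ?thesis unfolding unc_def
  proof (intro CollectI conjI exI[of _ "\<lambda>X. pure d X (phi X)"] D F allI)
    fix a b
    show "pure d (Lset n) (psi \<mu>) a b = (if a \<in> cfg d (Lset n) \<and> b \<in> cfg d (Lset n)
        then \<Prod>X\<in>\<mu>. pure d X (phi X) (restrict a X) (restrict b X) else 0)"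
    proof (cases "a \<in> cfg d (Lset n) \<and> b \<in> cfg d (Lset n)")
      case True
      have "(\<Prod>X\<in>\<mu>. pure d X (phi X) (restrict a X) (restrict b X)) =
            (\<Prod>X\<in>\<mu>. phi X (restrict a X) * cnj (phi X (restrict b X)))"
      proof (rule prod.cong[OF refl])
        fix X assume X: "X \<in> \<mu>"
        have "restrict a X \<in> cfg d X" "restrict b X \<in> cfg d X"
          using True restrict_cfg part_sub[OF P X] by auto
        thus "pure d X (phi X) (restrict a X) (restrict b X) = phi X (restrict a X) * cnj (phi X (restrict b X))"
          unfolding pure_def by simp
      qed
      also have "\<dots> = psi \<mu> a * cnj (psi \<mu> b)" unfolding psi_def cnj_prod prod.distrib ..
      finally show ?thesis using True unfolding pure_def by simp
    next
      case False
      have "pure d (Lset n) (psi \<mu>) a b = 0" using False unfolding pure_def by auto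
      thus ?thesis using False by auto
    qed
  qed
qed

lemma phi_nz: "a = c0 X \<or> a = c1 X \<Longrightarrow> phi X a \<noteq> 0"
  unfolding phi_def by simp

lemma rhoG_nonprod:
  assumes mu: "\<mu> \<in> PI n" and dd: "\<forall>i\<in>Lset n. 1 < d i" and xi: "\<xi> \<in> PI n"
    and u: "pure d (Lset n) (psi \<mu>) \<in> unc d n \<xi>"
  shows "refines \<mu> \<xi>"
proof (rule ccontr)
  assume "\<not> refines \<mu> \<xi>"
  then obtain X where X: "X \<in> \<mu>" and nX: "\<forall>Y\<in>\<xi>. \<not> X \<subseteq> Y" unfolding refines_def by blast
  have P: "partition_on (Lset n) \<mu>" using PI_part[OF mu] .
  have Q: "partition_on (Lset n) \<xi>" using PI_part[OF xi] .
  have XL: "X \<subseteq> Lset n" using part_sub[OF P X] .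
  have "X \<noteq> {}" using partition_onD3[OF P] X by blast
  then obtain i where i: "i \<in> X" by blast
  have iL: "i \<in> Lset n" using i XL by blast
  define A where "A = blk \<xi> i"
  have A: "A \<in> \<xi>" "i \<in> A" using blk[OF Q iL] A_def by auto
  obtain j where j: "j \<in> X" "j \<notin> A" using nX A by blast
  have jL: "j \<in> Lset n" using j XL by blast
  define z0 where "z0 = restrict (\<lambda>_. 0::nat) (Lset n)"
  define z1 where "z1 = restrict (\<lambda>k. if k \<in> X then 1 else 0::nat) (Lset n)"
  have z0: "z0 \<in> cfg d (Lset n)" using dd unfolding z0_def cfg_def by auto
  have z1: "z1 \<in> cfg d (Lset n)" using dd unfolding z1_def cfg_def by auto
  define \<rho> where "\<rho> = pure d (Lset n) (psi \<mu>)"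
  obtain r where r: "prodrep d n \<xi> \<rho> r" using unc_prodrep[OF u[folded \<rho>_def]] by blast
  have sw: "\<rho> (fill z0 A z1) (fill z0 A z1) * \<rho> (fill z1 A z0) (fill z1 A z0) = \<rho> z0 z0 * \<rho> z1 z1"
    by (rule swap[OF xi A(1) r z0 z0 z1 z1])
  define m where "m = fill z0 A z1"
  have AL: "A \<subseteq> Lset n" using part_sub[OF Q A(1)] .
  have mL: "m \<in> cfg d (Lset n)" unfolding m_def using fill_cfg1[OF z0 z1 AL] .
  have mi: "m i = 0" unfolding m_def fill_def z0_def using A(2) iL by simp
  have mj: "m j = 1" unfolding m_def fill_def z1_def using j jL by simp
  have "restrict m X \<noteq> c0 X"
  proof
    assume "restrict m X = c0 X"
    hence "restrict m X j = c0 X j" by simp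
    thus False using mj j unfolding c0_def by simp
  qed
  moreover have "restrict m X \<noteq> c1 X"
  proof
    assume "restrict m X = c1 X"
    hence "restrict m X i = c1 X i" by simp
    thus False using mi i unfolding c1_def by simp
  qed
  ultimately have "phi X (restrict m X) = 0" unfolding phi_def by simp
  hence "psi \<mu> m = 0" unfolding psi_def using X PI_fin[OF mu] by (simp add: prod_zero_iff) blast
  hence lhs0: "\<rho> (fill z0 A z1) (fill z0 A z1) = 0" unfolding \<rho>_def pure_def m_def by simp
  have r0: "\<And>Y. Y \<subseteq> Lset n \<Longrightarrow> restrict z0 Y = c0 Y" unfolding z0_def c0_def by (auto simp: fun_eq_iff)
  have p0: "psi \<mu> z0 \<noteq> 0" unfolding psi_def
  proof (subst prod_zero_iff[OF PI_fin[OF mu]], rule notI)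
    assume "\<exists>Y\<in>\<mu>. phi Y (restrict z0 Y) = 0"
    then obtain Y where "Y \<in> \<mu>" "phi Y (restrict z0 Y) = 0" by blast
    thus False using r0[OF part_sub[OF P]] phi_nz by metis
  qed
  have p1: "psi \<mu> z1 \<noteq> 0" unfolding psi_def
  proof (subst prod_zero_iff[OF PI_fin[OF mu]], rule notI)
    assume "\<exists>Y\<in>\<mu>. phi Y (restrict z1 Y) = 0"
    then obtain Y where Y: "Y \<in> \<mu>" "phi Y (restrict z1 Y) = 0" by blast
    have YL: "Y \<subseteq> Lset n" using part_sub[OF P Y(1)] .
    show False
    proof (cases "Y = X")
      case True
      have "restrict z1 Y = c1 Y" using True YL unfolding z1_def c1_def by (auto simp: fun_eq_iff)
      thus False using Y phi_nz by metis
    next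
      case False
      have "Y \<inter> X = {}" using part_eq[OF P Y(1) X] False by blast
      hence "restrict z1 Y = c0 Y" using YL unfolding z1_def c0_def by (auto simp: fun_eq_iff)
      thus False using Y phi_nz by metis
    qed
  qed
  have "\<rho> z0 z0 * \<rho> z1 z1 \<noteq> 0" unfolding \<rho>_def pure_def using z0 z1 p0 p1 by simp
  thus False using sw lhs0 by simp
qed


lemma rep_cunc:
  assumes X: "\<Xi> \<in> PIII n" and dd: "\<forall>i\<in>Lset n. 1 < d i" and r: "rep n \<Xi> \<mu>"
  shows "pure d (Lset n) (psi \<mu>) \<in> Cunc d n \<Xi>"
proof -
  have mu: "\<mu> \<in> PI n" and rr: "\<And>S. S \<in> PII n \<Longrightarrow> S \<in> \<Xi> \<longleftrightarrow> \<mu> \<in> S" using r rep_def by auto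
  have XP: "\<Xi> \<subseteq> PII n" using X PIII_def by auto
  define \<rho> where "\<rho> = pure d (Lset n) (psi \<mu>)"
  have u: "\<rho> \<in> unc d n \<mu>" unfolding \<rho>_def by (rule rhoG_unc[OF mu dd])
  have D: "\<rho> \<in> Dens d (Lset n)" using unc_dens[OF u] .
  have inS: "\<And>S. S \<in> \<Xi> \<Longrightarrow> \<rho> \<in> Sunc d n S"
    unfolding Sunc_def using rr XP u by blast
  have outS: "\<And>S. S \<in> PII n - \<Xi> \<Longrightarrow> \<rho> \<notin> Sunc d n S"
  proof
    fix S assume S: "S \<in> PII n - \<Xi>" and "\<rho> \<in> Sunc d n S"
    then obtain \<xi> where xS: "\<xi> \<in> S" and ux: "\<rho> \<in> unc d n \<xi>" unfolding Sunc_def by blast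
    have xi: "\<xi> \<in> PI n" using S xS unfolding PII_def by blast
    have "refines \<mu> \<xi>" using rhoG_nonprod[OF mu dd xi ux[unfolded \<rho>_def]] .
    hence "\<mu> \<in> S" using S xS mu unfolding PII_def by blast
    thus False using rr S by blast
  qed
  show ?thesis unfolding Cunc_def \<rho>_def[symmetric] using inS outS D by blast
qed

theorem lemma5:
  fixes n :: nat and d :: "nat \<Rightarrow> nat" and \<Xi> :: "nat set set set set"
  assumes "n \<ge> 1"
    and "\<forall>i\<in>Lset n. 1 < d i"
    and "\<Xi> \<in> PIII n"
  shows "Cunc d n \<Xi> \<noteq> {} \<longleftrightarrow>
           (\<Xi> = {U \<in> PII n. \<Inter>\<Xi> \<subseteq> U} \<and>
            PII n - \<Xi> = {U \<in> PII n. U \<subseteq> \<Union>(PII n - \<Xi>)})"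
proof
  assume "Cunc d n \<Xi> \<noteq> {}"
  then obtain \<rho> where "\<rho> \<in> Cunc d n \<Xi>" by blast
  then obtain \<mu> where "rep n \<Xi> \<mu>" using cunc_rep[OF assms(3)] by blast
  thus "\<Xi> = {U \<in> PII n. \<Inter>\<Xi> \<subseteq> U} \<and> PII n - \<Xi> = {U \<in> PII n. U \<subseteq> \<Union>(PII n - \<Xi>)}"
    by (rule rep_imp_rhs[OF assms(3)])
next
  assume "\<Xi> = {U \<in> PII n. \<Inter>\<Xi> \<subseteq> U} \<and> PII n - \<Xi> = {U \<in> PII n. U \<subseteq> \<Union>(PII n - \<Xi>)}"
  then obtain \<mu> where "rep n \<Xi> \<mu>" using rhs_imp_rep[OF assms(3)] by blast
  thus "Cunc d n \<Xi> \<noteq> {}" using rep_cunc[OF assms(3) assms(2)] by blast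
qed

end
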